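(* Let $\mathcal{G}$ and $\mathcal{H}$ be groupoids (not necessarily finite) and let $\phi,\psi\colon\widetilde{S}(\mathcal{G})\to\widetilde{S}(\mathcal{H})$ be morphisms of quasi-schemoids. Then there exists a homotopy $L\colon\phi\Rightarrow\psi$ if and only if $\psi(j)^{-1}\phi(i)=\psi(l)^{-1}\phi(k)$ for all morphisms $(j,i)$ and $(l,k)$ of $\widetilde{\mathcal{G}}$ with $j^{-1}i=l^{-1}k$.
   Context: For a groupoid $\mathcal{H}$, the quasi-schemoid $\widetilde{S}(\mathcal{H})=(\widetilde{\mathcal{H}},S)$ has $ob(\widetilde{\mathcal{H}})=mor(\mathcal{H})$, $\mathrm{Hom}_{\widetilde{\mathcal{H}}}(g,h)=\{(h,g)\}$ if $t(h)=t(g)$ and empty otherwise (composition $(k,h)\circ(h,g)=(k,g)$), and partition $S=\{\mathcal{G}_f\}_{f\in mor(\mathcal{H})}$ with $\mathcal{G}_f=\{(k,l)\mid k^{-1}l=f\}$. Here $\phi(i)$, $\psi(j)$ denote the images of objects of $\widetilde{\mathcal{G}}$, i.e. morphisms of $\mathcal{H}$, and products are compositions in $\mathcal{H}$. A morphism of quasi-schemoids is a functor sending each block of the source partition into some block of the target partition. Product: $(\mathcal{C},S)\times(\mathcal{E},S')=(\mathcal{C}\times\mathcal{E},\{\sigma\times\tau\})$. $[1]$ has objects $0,1$ and one non-identity morphism $0\to1$; $I=([1],\{\{f\}\}_f)$. A homotopy $L\colon\phi\Rightarrow\psi$ is a morphism of quasi-schemoids $L\colon\widetilde{S}(\mathcal{G})\times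 I\to\widetilde{S}(\mathcal{H})$ with $L\circ\varepsilon_0=\phi$, $L\circ\varepsilon_1=\psi$, where $\varepsilon_i(a)=(a,i)$, $\varepsilon_i(f)=(f,1_i)$. *)

theory Defs
  imports Main
begin

(* A small category given by its object set, arrow set, domain, codomain,
   composition (cmp C g f = g o f, defined when ccod C f = cdom C g) and identities. *)
record ('o,'a) cat =
  obj  :: "'o set"
  arr  :: "'a set"
  cdom :: "'a \<Rightarrow> 'o"
  ccod :: "'a \<Rightarrow> 'o"
  cmp  :: "'a \<Rightarrow> 'a \<Rightarrow> 'a"
  idn  :: "'o \<Rightarrow> 'a"

definition is_category :: "('o,'a) cat \<Rightarrow> bool" where
  "is_category C \<longleftrightarrow>
     (\<forall>f\<in>arr C. cdom C f \<in> obj C \<and> ccod C f \<in> obj C) \<and>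
     (\<forall>x\<in>obj C. idn C x \<in> arr C \<and> cdom C (idn C x) = x \<and> ccod C (idn C x) = x) \<and>
     (\<forall>f\<in>arr C. \<forall>g\<in>arr C. ccod C f = cdom C g \<longrightarrow>
         cmp C g f \<in> arr C \<and> cdom C (cmp C g f) = cdom C f \<and> ccod C (cmp C g f) = ccod C g) \<and>
     (\<forall>f\<in>arr C. cmp C f (idn C (cdom C f)) = f \<and> cmp C (idn C (ccod C f)) f = f) \<and>
     (\<forall>f\<in>arr C. \<forall>g\<in>arr C. \<forall>h\<in>arr C. ccod C f = cdom C g \<longrightarrow> ccod C g = cdom C h \<longrightarrow>
         cmp C h (cmp C g f) = cmp C (cmp C h g) f)"

definition is_inverse :: "('o,'a) cat \<Rightarrow> 'a \<Rightarrow> 'a \<Rightarrow> bool" where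
  "is_inverse C f g \<longleftrightarrow> g \<in> arr C \<and> cdom C g = ccod C f \<and> ccod C g = cdom C f \<and>
     cmp C g f = idn C (cdom C f) \<and> cmp C f g = idn C (ccod C f)"

definition is_groupoid :: "('o,'a) cat \<Rightarrow> bool" where
  "is_groupoid C \<longleftrightarrow> is_category C \<and> (\<forall>f\<in>arr C. \<exists>g. is_inverse C f g)"

definition ginv :: "('o,'a) cat \<Rightarrow> 'a \<Rightarrow> 'a" where
  "ginv C f = (THE g. is_inverse C f g)"

definition is_functor :: "('o,'a) cat \<Rightarrow> ('p,'b) cat \<Rightarrow> ('o \<Rightarrow> 'p) \<Rightarrow> ('a \<Rightarrow> 'b) \<Rightarrow> bool" where
  "is_functor C E Fo Fa \<longleftrightarrow>
     (\<forall>x\<in>obj C. Fo x \<in> obj E) \<and>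
     (\<forall>f\<in>arr C. Fa f \<in> arr E \<and> cdom E (Fa f) = Fo (cdom C f) \<and> ccod E (Fa f) = Fo (ccod C f)) \<and>
     (\<forall>f\<in>arr C. \<forall>g\<in>arr C. ccod C f = cdom C g \<longrightarrow> Fa (cmp C g f) = cmp E (Fa g) (Fa f)) \<and>
     (\<forall>x\<in>obj C. Fa (idn C x) = idn E (Fo x))"

definition qs_morphism ::
  "('o,'a) cat \<Rightarrow> 'a set set \<Rightarrow> ('p,'b) cat \<Rightarrow> 'b set set \<Rightarrow> ('o \<Rightarrow> 'p) \<Rightarrow> ('a \<Rightarrow> 'b) \<Rightarrow> bool" where
  "qs_morphism C S E S' Fo Fa \<longleftrightarrow> is_functor C E Fo Fa \<and> (\<forall>\<sigma>\<in>S. \<exists>\<tau>\<in>S'. Fa ` \<sigma> \<subseteq> \<tau>)"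

(* The category H~ : objects = arrows of H, Hom(g,h) = {(h,g)} if t(h) = t(g) *)
definition Stilde_cat :: "('o,'a) cat \<Rightarrow> ('a, 'a \<times> 'a) cat" where
  "Stilde_cat H = \<lparr> obj = arr H,
                    arr = {(h,g). h \<in> arr H \<and> g \<in> arr H \<and> ccod H h = ccod H g},
                    cdom = snd, ccod = fst,
                    cmp = (\<lambda>x y. (fst x, snd y)),
                    idn = (\<lambda>g. (g,g)) \<rparr>"

definition Stilde_part :: "('o,'a) cat \<Rightarrow> ('a \<times> 'a) set set" where
  "Stilde_part H = {{(k,l) \<in> arr (Stilde_cat H). cmp H (ginv H k) l = f} | f. f \<in> arr H}"

definition prod_cat :: "('o,'a) cat \<Rightarrow> ('p,'b) cat \<Rightarrow> ('o \<times> 'p, 'a \<times> 'b) cat" where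
  "prod_cat C E = \<lparr> obj = obj C \<times> obj E, arr = arr C \<times> arr E,
                    cdom = (\<lambda>(f,g). (cdom C f, cdom E g)),
                    ccod = (\<lambda>(f,g). (ccod C f, ccod E g)),
                    cmp = (\<lambda>(f1,g1) (f2,g2). (cmp C f1 f2, cmp E g1 g2)),
                    idn = (\<lambda>(x,y). (idn C x, idn E y)) \<rparr>"

definition prod_part :: "'a set set \<Rightarrow> 'b set set \<Rightarrow> ('a \<times> 'b) set set" where
  "prod_part S S' = {\<sigma> \<times> \<tau> | \<sigma> \<tau>. \<sigma> \<in> S \<and> \<tau> \<in> S'}"

(* [1]: objects 0 = False, 1 = True; arrows (a,b) : a -> b with a <= b *)
definition interval_cat :: "(bool, bool \<times> bool) cat" where
  "interval_cat = \<lparr> obj = UNIV, arr = {(False,False),(False,True),(True,True)},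
                    cdom = fst, ccod = snd,
                    cmp = (\<lambda>g f. (fst f, snd g)),
                    idn = (\<lambda>x. (x,x)) \<rparr>"

definition interval_part :: "(bool \<times> bool) set set" where
  "interval_part = {{f} | f. f \<in> arr interval_cat}"

definition eps_obj :: "bool \<Rightarrow> 'a \<Rightarrow> 'a \<times> bool" where
  "eps_obj i a = (a, i)"

definition eps_arr :: "bool \<Rightarrow> 'm \<Rightarrow> 'm \<times> (bool \<times> bool)" where
  "eps_arr i f = (f, idn interval_cat i)"

definition is_homotopy ::
  "('o,'a) cat \<Rightarrow> ('p,'b) cat \<Rightarrow> ('a \<Rightarrow> 'b) \<Rightarrow> ('a \<times> 'a \<Rightarrow> 'b \<times> 'b) \<Rightarrow>
   ('a \<Rightarrow> 'b) \<Rightarrow> ('a \<times> 'a \<Rightarrow> 'b \<times> 'b) \<Rightarrow>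
   ('a \<times> bool \<Rightarrow> 'b) \<Rightarrow> (('a \<times> 'a) \<times> (bool \<times> bool) \<Rightarrow> 'b \<times> 'b) \<Rightarrow> bool" where
  "is_homotopy G H \<phi>o \<phi>a \<psi>o \<psi>a Lo La \<longleftrightarrow>
     qs_morphism (prod_cat (Stilde_cat G) interval_cat) (prod_part (Stilde_part G) interval_part)
                 (Stilde_cat H) (Stilde_part H) Lo La \<and>
     (\<forall>a\<in>obj (Stilde_cat G). Lo (eps_obj False a) = \<phi>o a \<and> Lo (eps_obj True a) = \<psi>o a) \<and>
     (\<forall>f\<in>arr (Stilde_cat G). La (eps_arr False f) = \<phi>a f \<and> La (eps_arr True f) = \<psi>a f)"

end

theory Submission
  imports Defs
begin

lemma inverse_unique:
  assumes "is_category C" "f \<in> arr C" "is_inverse C f g" "is_inverse C f g'"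
  shows "g = g'"
proof -
  have c: "\<forall>f\<in>arr C. \<forall>g\<in>arr C. ccod C f = cdom C g \<longrightarrow>
         cmp C g f \<in> arr C \<and> cdom C (cmp C g f) = cdom C f \<and> ccod C (cmp C g f) = ccod C g"
   and u: "\<forall>f\<in>arr C. cmp C f (idn C (cdom C f)) = f \<and> cmp C (idn C (ccod C f)) f = f"
   and a: "\<forall>f\<in>arr C. \<forall>g\<in>arr C. \<forall>h\<in>arr C. ccod C f = cdom C g \<longrightarrow> ccod C g = cdom C h \<longrightarrow>
         cmp C h (cmp C g f) = cmp C (cmp C h g) f"
    using assms(1) unfolding is_category_def by blast+
  have g: "g \<in> arr C" "cdom C g = ccod C f" "ccod C g = cdom C f"
     "cmp C g f = idn C (cdom C f)" "cmp C f g = idn C (ccod C f)"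
    using assms(3) unfolding is_inverse_def by auto
  have g': "g' \<in> arr C" "cdom C g' = ccod C f" "ccod C g' = cdom C f"
     "cmp C g' f = idn C (cdom C f)" "cmp C f g' = idn C (ccod C f)"
    using assms(4) unfolding is_inverse_def by auto
  have "g = cmp C g (idn C (cdom C g))" using u g by metis
  also have "\<dots> = cmp C g (cmp C f g')" using g g' by simp
  also have "\<dots> = cmp C (cmp C g f) g'" using a g g' assms(2) by metis
  also have "\<dots> = cmp C (idn C (ccod C g')) g'" using g g' by simp
  also have "\<dots> = g'" using u g' by metis
  finally show ?thesis .
qed

lemma ginv_inverse:
  assumes "is_groupoid C" "f \<in> arr C"
  shows "is_inverse C f (ginv C f)"
proof -
  obtain g where g: "is_inverse C f g" using assms unfolding is_groupoid_def by blast
  have "is_inverse C f (THE g. is_inverse C f g)"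
  proof (rule theI[of _ g])
    show "is_inverse C f g" by (rule g)
    have cat: "is_category C" using assms(1) unfolding is_groupoid_def by simp
    show "\<And>x. is_inverse C f x \<Longrightarrow> x = g" using inverse_unique[OF cat assms(2)] g by blast
  qed
  thus ?thesis unfolding ginv_def .
qed

lemma ginv_props:
  assumes "is_groupoid C" "f \<in> arr C"
  shows "ginv C f \<in> arr C" "cdom C (ginv C f) = ccod C f" "ccod C (ginv C f) = cdom C f"
  using ginv_inverse[OF assms] unfolding is_inverse_def by auto

lemma qs_arr:
  assumes "qs_morphism (Stilde_cat G) SG (Stilde_cat H) SH Fo Fa" "(h,g) \<in> arr (Stilde_cat G)"
  shows "Fa (h,g) = (Fo h, Fo g)" "(Fo h, Fo g) \<in> arr (Stilde_cat H)"
proof -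
  have "Fa (h,g) \<in> arr (Stilde_cat H)" "cdom (Stilde_cat H) (Fa (h,g)) = Fo g"
       "ccod (Stilde_cat H) (Fa (h,g)) = Fo h"
    using assms unfolding qs_morphism_def is_functor_def by (auto simp: Stilde_cat_def)
  thus "Fa (h,g) = (Fo h, Fo g)" "(Fo h, Fo g) \<in> arr (Stilde_cat H)"
    by (auto simp: Stilde_cat_def prod_eq_iff)
qed

lemma qs_obj:
  assumes "qs_morphism (Stilde_cat G) SG (Stilde_cat H) SH Fo Fa" "a \<in> arr G"
  shows "Fo a \<in> arr H"
  using assms unfolding qs_morphism_def is_functor_def by (auto simp: Stilde_cat_def)

theorem lemma4p11:
  fixes G :: "('o,'a) cat" and H :: "('p,'b) cat"
    and \<phi>o \<psi>o :: "'a \<Rightarrow> 'b" and \<phi>a \<psi>a :: "'a \<times> 'a \<Rightarrow> 'b \<times> 'b"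
  assumes "is_groupoid G" and "is_groupoid H"
    and "qs_morphism (Stilde_cat G) (Stilde_part G) (Stilde_cat H) (Stilde_part H) \<phi>o \<phi>a"
    and "qs_morphism (Stilde_cat G) (Stilde_part G) (Stilde_cat H) (Stilde_part H) \<psi>o \<psi>a"
  shows "(\<exists>Lo La. is_homotopy G H \<phi>o \<phi>a \<psi>o \<psi>a Lo La) \<longleftrightarrow>
         (\<forall>j i l k. (j,i) \<in> arr (Stilde_cat G) \<longrightarrow> (l,k) \<in> arr (Stilde_cat G) \<longrightarrow>
            cmp G (ginv G j) i = cmp G (ginv G l) k \<longrightarrow>
              ccod H (\<psi>o j) = ccod H (\<phi>o i) \<and> ccod H (\<psi>o l) = ccod H (\<phi>o k) \<and>
              cmp H (ginv H (\<psi>o j)) (\<phi>o i) = cmp H (ginv H (\<psi>o l)) (\<phi>o k))"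
    (is "?L \<longleftrightarrow> ?R")
proof
  assume ?L
  then obtain Lo La where hom: "is_homotopy G H \<phi>o \<phi>a \<psi>o \<psi>a Lo La" by blast
  have fnc: "is_functor (prod_cat (Stilde_cat G) interval_cat) (Stilde_cat H) Lo La"
    and blk: "\<forall>\<sigma>\<in>prod_part (Stilde_part G) interval_part. \<exists>\<tau>\<in>Stilde_part H. La ` \<sigma> \<subseteq> \<tau>"
    and eo: "\<forall>a\<in>arr G. Lo (a, False) = \<phi>o a \<and> Lo (a, True) = \<psi>o a"
    using hom unfolding is_homotopy_def qs_morphism_def eps_obj_def by (auto simp: Stilde_cat_def)
  have La_FT: "La ((j,i),(False,True)) = (\<psi>o j, \<phi>o i) \<and> (\<psi>o j, \<phi>o i) \<in> arr (Stilde_cat H)"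
    if "(j,i) \<in> arr (Stilde_cat G)" for j i
  proof -
    have m: "((j,i),(False,True)) \<in> arr (prod_cat (Stilde_cat G) interval_cat)"
      using that by (simp add: prod_cat_def interval_cat_def)
    have ij: "i \<in> arr G" "j \<in> arr G" using that by (auto simp: Stilde_cat_def)
    have "La ((j,i),(False,True)) \<in> arr (Stilde_cat H)"
      "cdom (Stilde_cat H) (La ((j,i),(False,True))) = Lo (i, False)"
      "ccod (Stilde_cat H) (La ((j,i),(False,True))) = Lo (j, True)"
      using fnc m unfolding is_functor_def
      by (auto simp: prod_cat_def Stilde_cat_def interval_cat_def)
    thus ?thesis using eo ij by (auto simp: Stilde_cat_def prod_eq_iff)
  qed
  show ?R
  proof (intro allI impI)
    fix j i l k
    assume ji: "(j,i) \<in> arr (Stilde_cat G)" and lk: "(l,k) \<in> arr (Stilde_cat G)"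
      and eq: "cmp G (ginv G j) i = cmp G (ginv G l) k"
    define f where "f = cmp G (ginv G j) i"
    have jiG: "j \<in> arr G" "i \<in> arr G" "ccod G j = ccod G i" using ji by (auto simp: Stilde_cat_def)
    have "f \<in> arr G" unfolding f_def
      using ginv_props[OF assms(1) jiG(1)] jiG assms(1)
      unfolding is_groupoid_def is_category_def by metis
    define \<sigma> where "\<sigma> = {(k,l) \<in> arr (Stilde_cat G). cmp G (ginv G k) l = f}"
    have "\<sigma> \<in> Stilde_part G" unfolding \<sigma>_def Stilde_part_def using \<open>f \<in> arr G\<close> by blast
    moreover have "{(False,True)} \<in> interval_part" by (auto simp: interval_part_def interval_cat_def)
    ultimately have "\<sigma> \<times> {(False,True)} \<in> prod_part (Stilde_part G) interval_part"
      unfolding prod_part_def by blast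
    then obtain \<tau> where \<tau>: "\<tau> \<in> Stilde_part H" "La ` (\<sigma> \<times> {(False,True)}) \<subseteq> \<tau>" using blk by blast
    then obtain f' where \<tau>': "\<tau> = {(k,l) \<in> arr (Stilde_cat H). cmp H (ginv H k) l = f'}"
      unfolding Stilde_part_def by blast
    have "((j,i),(False,True)) \<in> \<sigma> \<times> {(False,True)}" "((l,k),(False,True)) \<in> \<sigma> \<times> {(False,True)}"
      using ji lk eq unfolding \<sigma>_def f_def by auto
    hence "(\<psi>o j, \<phi>o i) \<in> \<tau>" "(\<psi>o l, \<phi>o k) \<in> \<tau>" using \<tau>(2) La_FT ji lk by (metis image_subset_iff)+
    thus "ccod H (\<psi>o j) = ccod H (\<phi>o i) \<and> ccod H (\<psi>o l) = ccod H (\<phi>o k) \<and>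
              cmp H (ginv H (\<psi>o j)) (\<phi>o i) = cmp H (ginv H (\<psi>o l)) (\<phi>o k)"
      unfolding \<tau>' by (auto simp: Stilde_cat_def)
  qed
next
  assume R: ?R
  define Lo where "Lo = (\<lambda>(a::'a, b::bool). if b then \<psi>o a else \<phi>o a)"
  define La where "La = (\<lambda>((h::'a,g::'a),(x::bool,y::bool)). (Lo (h,y), Lo (g,x)))"
  have FT: "(\<psi>o h, \<phi>o g) \<in> arr (Stilde_cat H)" if "(h,g) \<in> arr (Stilde_cat G)" for h g
  proof -
    have "ccod H (\<psi>o h) = ccod H (\<phi>o g)" using R that by blast
    moreover have "\<psi>o h \<in> arr H" "\<phi>o g \<in> arr H"
      using that qs_obj[OF assms(3)] qs_obj[OF assms(4)] by (auto simp: Stilde_cat_def)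
    ultimately show ?thesis by (simp add: Stilde_cat_def)
  qed
  have arrLa: "La a \<in> arr (Stilde_cat H)" if "a \<in> arr (prod_cat (Stilde_cat G) interval_cat)" for a
  proof -
    obtain h g x y where a: "a = ((h,g),(x,y))" by (metis prod.collapse)
    have hg: "(h,g) \<in> arr (Stilde_cat G)" and xy: "(x,y) \<in> {(False,False),(False,True),(True,True)}"
      using that a by (auto simp: prod_cat_def interval_cat_def)
    show ?thesis using xy a FT[OF hg] qs_arr(2)[OF assms(3) hg] qs_arr(2)[OF assms(4) hg]
      by (auto simp: La_def Lo_def)
  qed
  have fctr: "is_functor (prod_cat (Stilde_cat G) interval_cat) (Stilde_cat H) Lo La"
    unfolding is_functor_def
  proof (intro conjI ballI impI)
    fix x assume "x \<in> obj (prod_cat (Stilde_cat G) interval_cat)"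
    thus "Lo x \<in> obj (Stilde_cat H)"
      using qs_obj[OF assms(3)] qs_obj[OF assms(4)]
      by (auto simp: prod_cat_def Stilde_cat_def Lo_def)
  next
    fix f assume f: "f \<in> arr (prod_cat (Stilde_cat G) interval_cat)"
    show "La f \<in> arr (Stilde_cat H)" using arrLa[OF f] .
    show "cdom (Stilde_cat H) (La f) = Lo (cdom (prod_cat (Stilde_cat G) interval_cat) f)"
      by (auto simp: La_def Stilde_cat_def prod_cat_def interval_cat_def split: prod.splits)
    show "ccod (Stilde_cat H) (La f) = Lo (ccod (prod_cat (Stilde_cat G) interval_cat) f)"
      by (auto simp: La_def Stilde_cat_def prod_cat_def interval_cat_def split: prod.splits)
  next
    fix f g
    assume "f \<in> arr (prod_cat (Stilde_cat G) interval_cat)" "g \<in> arr (prod_cat (Stilde_cat G) interval_cat)"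
      "ccod (prod_cat (Stilde_cat G) interval_cat) f = cdom (prod_cat (Stilde_cat G) interval_cat) g"
    thus "La (cmp (prod_cat (Stilde_cat G) interval_cat) g f) = cmp (Stilde_cat H) (La g) (La f)"
      by (auto simp: La_def Stilde_cat_def prod_cat_def interval_cat_def split: prod.splits)
  next
    fix x assume "x \<in> obj (prod_cat (Stilde_cat G) interval_cat)"
    thus "La (idn (prod_cat (Stilde_cat G) interval_cat) x) = idn (Stilde_cat H) (Lo x)"
      by (auto simp: La_def Stilde_cat_def prod_cat_def interval_cat_def split: prod.splits)
  qed
  have blocks: "\<forall>\<sigma>\<in>prod_part (Stilde_part G) interval_part. \<exists>\<tau>\<in>Stilde_part H. La ` \<sigma> \<subseteq> \<tau>"
  proof
    fix \<Sigma> assume "\<Sigma> \<in> prod_part (Stilde_part G) interval_part"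
    then obtain \<sigma> e where \<Sigma>: "\<Sigma> = \<sigma> \<times> {e}" "\<sigma> \<in> Stilde_part G" "e \<in> arr interval_cat"
      unfolding prod_part_def interval_part_def by blast
    obtain f where f: "f \<in> arr G" "\<sigma> = {(k,l) \<in> arr (Stilde_cat G). cmp G (ginv G k) l = f}"
      using \<Sigma>(2) unfolding Stilde_part_def by blast
    have e: "e = (False,False) \<or> e = (False,True) \<or> e = (True,True)"
      using \<Sigma>(3) by (auto simp: interval_cat_def)
    moreover
    { assume e: "e = (False,False)"
      obtain \<tau> where "\<tau>\<in>Stilde_part H" "\<phi>a ` \<sigma> \<subseteq> \<tau>" using assms(3) \<Sigma>(2) unfolding qs_morphism_def by blast
      moreover have "La ` \<Sigma> = \<phi>a ` \<sigma>"
      proof -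
        have "\<And>h g. (h,g) \<in> \<sigma> \<Longrightarrow> La ((h,g),e) = \<phi>a (h,g)"
          using qs_arr(1)[OF assms(3)] f e by (auto simp: La_def Lo_def)
        thus ?thesis unfolding \<Sigma> by force
      qed
      ultimately have "\<exists>\<tau>\<in>Stilde_part H. La ` \<Sigma> \<subseteq> \<tau>" by auto }
    moreover
    { assume e: "e = (True,True)"
      obtain \<tau> where "\<tau>\<in>Stilde_part H" "\<psi>a ` \<sigma> \<subseteq> \<tau>" using assms(4) \<Sigma>(2) unfolding qs_morphism_def by blast
      moreover have "La ` \<Sigma> = \<psi>a ` \<sigma>"
      proof -
        have "\<And>h g. (h,g) \<in> \<sigma> \<Longrightarrow> La ((h,g),e) = \<psi>a (h,g)"
          using qs_arr(1)[OF assms(4)] f e by (auto simp: La_def Lo_def)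
        thus ?thesis unfolding \<Sigma> by force
      qed
      ultimately have "\<exists>\<tau>\<in>Stilde_part H. La ` \<Sigma> \<subseteq> \<tau>" by auto }
    moreover
    { assume e: "e = (False,True)"
      have cat: "is_category G" using assms(1) unfolding is_groupoid_def by blast
      have idc: "idn G (ccod G f) \<in> arr G" "ccod G (idn G (ccod G f)) = ccod G f"
        using cat f(1) unfolding is_category_def by metis+
      have inv_id: "ginv G (idn G (ccod G f)) = idn G (ccod G f)"
      proof -
        have "is_inverse G (idn G (ccod G f)) (idn G (ccod G f))"
          using cat f(1) unfolding is_inverse_def is_category_def by metis
        thus ?thesis using inverse_unique[OF cat idc(1)] ginv_inverse[OF assms(1) idc(1)] by metis
      qed
      have "cmp G (idn G (ccod G f)) f = f" using cat f(1) unfolding is_category_def by metis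
      hence mem: "(idn G (ccod G f), f) \<in> \<sigma>" using f idc inv_id by (auto simp: Stilde_cat_def)
      define k0 where "k0 = idn G (ccod G f)"
      define f' where "f' = cmp H (ginv H (\<psi>o k0)) (\<phi>o f)"
      define \<tau> where "\<tau> = {(k,l) \<in> arr (Stilde_cat H). cmp H (ginv H k) l = f'}"
      have "\<phi>o f \<in> arr H" "\<psi>o k0 \<in> arr H"
        using qs_obj[OF assms(3)] qs_obj[OF assms(4)] f(1) idc(1) unfolding k0_def by auto
      moreover have "ccod H (\<psi>o k0) = ccod H (\<phi>o f)" using FT[of k0 f] mem unfolding k0_def
        by (auto simp: Stilde_cat_def f(2))
      ultimately have "f' \<in> arr H" unfolding f'_def
        using ginv_props[OF assms(2), of "\<psi>o k0"] assms(2)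
        unfolding is_groupoid_def is_category_def by metis
      hence "\<tau> \<in> Stilde_part H" unfolding \<tau>_def Stilde_part_def by blast
      moreover have "La ` \<Sigma> \<subseteq> \<tau>"
      proof
        fix z assume "z \<in> La ` \<Sigma>"
        then obtain h g where hg: "(h,g) \<in> \<sigma>" "z = La ((h,g),e)" unfolding \<Sigma> by auto
        have z: "z = (\<psi>o h, \<phi>o g)" using hg e by (simp add: La_def Lo_def)
        have hgA: "(h,g) \<in> arr (Stilde_cat G)" "cmp G (ginv G h) g = f" using hg f by auto
        have "cmp G (ginv G h) g = cmp G (ginv G k0) f" using hgA inv_id mem f
          unfolding k0_def by auto
        hence "cmp H (ginv H (\<psi>o h)) (\<phi>o g) = f'" using R hgA(1) mem f unfolding f'_def k0_def by blast
        thus "z \<in> \<tau>" unfolding \<tau>_def z using FT[OF hgA(1)] by auto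
      qed
      ultimately have "\<exists>\<tau>\<in>Stilde_part H. La ` \<Sigma> \<subseteq> \<tau>" by auto }
    ultimately show "\<exists>\<tau>\<in>Stilde_part H. La ` \<Sigma> \<subseteq> \<tau>" by blast
  qed
  have eo: "\<forall>a\<in>obj (Stilde_cat G). Lo (eps_obj False a) = \<phi>o a \<and> Lo (eps_obj True a) = \<psi>o a"
    by (auto simp: Lo_def eps_obj_def)
  have ea: "\<forall>f\<in>arr (Stilde_cat G). La (eps_arr False f) = \<phi>a f \<and> La (eps_arr True f) = \<psi>a f"
  proof
    fix f assume f: "f \<in> arr (Stilde_cat G)"
    obtain h g where "f = (h,g)" by fastforce
    thus "La (eps_arr False f) = \<phi>a f \<and> La (eps_arr True f) = \<psi>a f"
      using f qs_arr(1)[OF assms(3)] qs_arr(1)[OF assms(4)]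
      by (auto simp: La_def Lo_def eps_arr_def interval_cat_def)
  qed
  have "is_homotopy G H \<phi>o \<phi>a \<psi>o \<psi>a Lo La"
    unfolding is_homotopy_def qs_morphism_def using fctr blocks eo ea by blast
  thus ?L by blast
qed

end
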